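(* Let $\mu=\alpha_-\delta_{-\infty}+\alpha_0\mu_0+\alpha_+\delta_{+\infty}\in\mathcal{P}(\overline{\mathbb{Z}})$ with $\alpha_\sigma\ge0$, $\alpha_-+\alpha_0+\alpha_+=1$, $\mu_0\in\mathcal{P}(\mathbb{Z})$, and let $\varepsilon>0$. If $R\in\mathbb{N}$ satisfies $R>R_{\mu_0}(\varepsilon)$, then for all $n\in\mathbb{N}$ and all $w\in\Omega^{(0)}_n(\mu,2^{-R}\varepsilon)$, $$|N^\sigma(w)-\alpha_\sigma n|<2\varepsilon n\quad\text{for }\sigma\in\{-,0,+\},\qquad N_m(w)<3\varepsilon n\quad\text{for }m\in\{-R,-R+1,R-1,R\}.$$
   Context: $\overline{\mathbb{Z}}=\mathbb{Z}\cup\{\pm\infty\}$ with metric $d(h,k)=|\varphi(h)-\varphi(k)|$, $\varphi(\pm\infty)=\pm1$, $\varphi(k)=1-2^{-k}$ ($k\ge0$), $\varphi(k)=-1+2^{-|k|}$ ($k<0$). For signed measures, $\|\nu\|=\sup\{\int f\,d\nu: f\text{ 1-Lipschitz for }d,\ \sup|f|\le1\}$; $B(\mu,\varepsilon)=\{\nu\in\mathcal{P}(\overline{\mathbb{Z}}):\|\nu-\mu\|<\varepsilon\}$. $\Omega^{(0)}_n$ is the set of words $w=(w_1,\dots,w_n)\in\mathbb{Z}^n$ with $w_1=0$ and $|w_i-w_{i+1}|=1$ for all $i$; $\ell(w)=\frac1n\sum_{j=1}^n\delta_{w_j}$; $\Omega^{(0)}_n(\mu,\varepsilon)=\{w\in\Omega^{(0)}_n:\ell(w)\in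 B(\mu,\varepsilon)\}$. For $R\in\mathbb{N}$: $A^-=\{k\in\overline{\mathbb{Z}}:k\le-R\}$, $A^0=\{-R+1,\dots,R-1\}$, $A^+=\{k\in\overline{\mathbb{Z}}:k\ge R\}$. $N^\sigma(w)=\#\{j\le n:w_j\in A^\sigma\}$ and $N_m(w)=\#\{j\le n:w_j=m\}$. $R_{\mu_0}(\varepsilon)=\min\{R\in\mathbb{N}:\mu_0(\{-R+1,\dots,R-1\})>1-\varepsilon\}$. *)

theory Defs
  imports "HOL-Probability.Probability"
begin

datatype zbar = NInf | Fin int | PInf

fun phi :: "zbar \<Rightarrow> real" where
  "phi NInf = -1"
| "phi PInf = 1"
| "phi (Fin k) = (if k \<ge> 0 then 1 - 2 powr (- real_of_int k)
                  else -1 + 2 powr (- real_of_int \<bar>k\<bar>))"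

definition zd :: "zbar \<Rightarrow> zbar \<Rightarrow> real" where
  "zd h k = \<bar>phi h - phi k\<bar>"

definition lip1 :: "(zbar \<Rightarrow> real) \<Rightarrow> bool" where
  "lip1 f \<longleftrightarrow> (\<forall>x. \<bar>f x\<bar> \<le> 1) \<and> (\<forall>h k. \<bar>f h - f k\<bar> \<le> zd h k)"

definition bl_dist :: "zbar pmf \<Rightarrow> zbar pmf \<Rightarrow> real" where
  "bl_dist \<nu> \<mu> = (SUP f \<in> {f. lip1 f}.
      measure_pmf.expectation \<nu> f - measure_pmf.expectation \<mu> f)"

definition ballP :: "zbar pmf \<Rightarrow> real \<Rightarrow> zbar pmf set" where
  "ballP \<mu> \<epsilon> = {\<nu>. bl_dist \<nu> \<mu> < \<epsilon>}"

text \<open>Words w = (w_1,...,w_n) are lists, w_j = w ! (j-1).\<close>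
definition Omega0 :: "nat \<Rightarrow> int list set" where
  "Omega0 n = {w. length w = n \<and> n \<ge> 1 \<and> w ! 0 = 0 \<and>
                  (\<forall>i. Suc i < n \<longrightarrow> \<bar>w ! i - w ! Suc i\<bar> = 1)}"

definition ell :: "int list \<Rightarrow> zbar pmf" where
  "ell w = map_pmf Fin (pmf_of_multiset (mset w))"

definition Omega0_ball :: "nat \<Rightarrow> zbar pmf \<Rightarrow> real \<Rightarrow> int list set" where
  "Omega0_ball n \<mu> \<epsilon> = {w \<in> Omega0 n. ell w \<in> ballP \<mu> \<epsilon>}"

definition Nminus :: "nat \<Rightarrow> int list \<Rightarrow> nat" where
  "Nminus R w = card {j. j < length w \<and> w ! j \<le> - int R}"

definition Nzero :: "nat \<Rightarrow> int list \<Rightarrow> nat" where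
  "Nzero R w = card {j. j < length w \<and> w ! j \<in> {- int R + 1 .. int R - 1}}"

definition Nplus :: "nat \<Rightarrow> int list \<Rightarrow> nat" where
  "Nplus R w = card {j. j < length w \<and> w ! j \<ge> int R}"

definition Nm :: "int \<Rightarrow> int list \<Rightarrow> nat" where
  "Nm m w = card {j. j < length w \<and> w ! j = m}"

definition R_mu0 :: "int pmf \<Rightarrow> real \<Rightarrow> nat" where
  "R_mu0 \<mu>0 \<epsilon> = (LEAST R::nat. measure_pmf.prob \<mu>0 {- int R + 1 .. int R - 1} > 1 - \<epsilon>)"

end

theory Submission
  imports Defs
begin

fun le_cut :: "int \<Rightarrow> zbar \<Rightarrow> bool" where
  "le_cut a NInf = True" | "le_cut a (Fin i) = (i \<le> a)" | "le_cut a PInf = False"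

lemma two_powr_mono: "(a::real) \<le> b \<Longrightarrow> 2 powr a \<le> 2 powr b"
  by (rule powr_mono) auto

lemma phi_mono:
  assumes "j \<le> k" shows "phi (Fin j) \<le> phi (Fin k)"
proof (cases "0 \<le> j")
  case True
  then have "2 powr (- real_of_int k) \<le> 2 powr (- real_of_int j)"
    using assms by (intro two_powr_mono) simp
  then show ?thesis using True assms by simp
next
  case F: False
  show ?thesis
  proof (cases "k < 0")
    case True
    then have "2 powr (- real_of_int \<bar>j\<bar>) \<le> 2 powr (- real_of_int \<bar>k\<bar>)"
      using assms F by (intro two_powr_mono) simp
    then show ?thesis using True F by simp
  next
    case False
    have a: "2 powr (real_of_int j) \<le> 2 powr 0" using F by (intro two_powr_mono) simp
    have b: "2 powr (- real_of_int k) \<le> 2 powr 0" using False by (intro two_powr_mono) simp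
    show ?thesis using a b F False by simp
  qed
qed

lemma phi_gap: "2 powr (- real_of_int (max \<bar>a\<bar> \<bar>a+1\<bar>)) \<le> phi (Fin (a+1)) - phi (Fin a)"
proof (cases "a \<ge> 0")
  case True
  then have "phi (Fin (a+1)) - phi (Fin a) = 2 powr (- real_of_int a) - 2 powr (- real_of_int a - 1)"
    by simp
  also have "\<dots> = 2 powr (- real_of_int (a+1))"
    by (simp add: powr_diff)
  finally show ?thesis using True by simp
next
  case False
  show ?thesis
  proof (cases "a = -1")
    case True then show ?thesis by simp
  next
    case False2: False
    with False have a: "a \<le> -2" by simp
    then have "phi (Fin (a+1)) - phi (Fin a) = 2 powr (- real_of_int (-(a+1))) - 2 powr (- real_of_int (-a))"
      by simp
    also have "\<dots> = 2 powr (real_of_int a)" by (simp add: powr_add)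
    finally show ?thesis using a by simp
  qed
qed

lemma two_powr_le2: "(t::real) \<le> 1 \<Longrightarrow> 2 powr t \<le> 2"
  using powr_mono[of t 1 "2::real"] by simp

lemma phi_bounds: "-1 \<le> phi x \<and> phi x \<le> 1"
proof (cases x)
  case (Fin k)
  then show ?thesis using two_powr_le2[of "- real_of_int k"] two_powr_le2[of "real_of_int k"]
    by (auto simp: powr_ge_zero)
qed auto

lemma phi_le_cut:
  assumes "le_cut a h" shows "phi h \<le> phi (Fin a)"
  using assms phi_mono phi_bounds[of "Fin a"] by (cases h) auto

lemma phi_gt_cut:
  assumes "\<not> le_cut a k" shows "phi (Fin (a+1)) \<le> phi k"
  using assms phi_mono phi_bounds[of "Fin (a+1)"] by (cases k) auto

lemma cut_sep:
  assumes "le_cut a h" "\<not> le_cut a k"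
  shows "2 powr (- real_of_int (max \<bar>a\<bar> \<bar>a+1\<bar>)) \<le> zd h k"
  using phi_le_cut[OF assms(1)] phi_gt_cut[OF assms(2)] phi_gap[of a]
  unfolding zd_def by linarith

lemma zd_sym: "zd h k = zd k h" unfolding zd_def by simp
lemma zd_nonneg: "0 \<le> zd h k" unfolding zd_def by simp

lemma expect_bound:
  fixes p :: "zbar pmf" and f :: "zbar \<Rightarrow> real"
  assumes "\<forall>x. \<bar>f x\<bar> \<le> 1"
  shows "\<bar>measure_pmf.expectation p f\<bar> \<le> 1"
proof -
  have int: "integrable (measure_pmf p) f"
    apply (rule measure_pmf.integrable_const_bound[where B=1])
     apply (rule AE_I2) using assms apply simp
    apply simp
    done
  have "\<bar>measure_pmf.expectation p f\<bar> \<le> measure_pmf.expectation p (\<lambda>x. \<bar>f x\<bar>)"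
    by (rule integral_abs_bound)
  also have "\<dots> \<le> measure_pmf.expectation p (\<lambda>_. 1)"
    by (rule integral_mono) (use int assms in auto)
  finally have "\<bar>measure_pmf.expectation p f\<bar> \<le> measure_pmf.expectation p (\<lambda>_. 1)" .
  then show ?thesis by simp
qed

lemma bl_upper:
  assumes "lip1 f"
  shows "measure_pmf.expectation \<nu> f - measure_pmf.expectation \<mu> f \<le> bl_dist \<nu> \<mu>"
  unfolding bl_dist_def
proof (rule cSUP_upper)
  show "f \<in> {f. lip1 f}" using assms by simp
  show "bdd_above ((\<lambda>f. measure_pmf.expectation \<nu> f - measure_pmf.expectation \<mu> f) ` {f. lip1 f})"
  proof (rule bdd_aboveI[where M=2], clarsimp)
    fix g assume "lip1 g"
    then have "\<forall>x. \<bar>g x\<bar> \<le> 1" unfolding lip1_def by simp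
    from expect_bound[OF this, of \<nu>] expect_bound[OF this, of \<mu>]
    show "measure_pmf.expectation \<nu> g - measure_pmf.expectation \<mu> g \<le> 2" by linarith
  qed
qed

lemma sep_bound:
  fixes S :: "zbar set" and c :: real
  assumes c: "0 < c" "c \<le> 1"
    and sep: "\<And>h k. h \<in> S \<Longrightarrow> k \<notin> S \<Longrightarrow> c \<le> zd h k"
  shows "\<bar>measure_pmf.prob \<nu> S - measure_pmf.prob \<mu> S\<bar> * c \<le> bl_dist \<nu> \<mu>"
proof -
  define f where "f = (\<lambda>x. c * indicator S x)"
  have b: "\<bar>c * indicator S x\<bar> \<le> 1" for x using c by (auto simp: indicator_def)
  have d: "\<bar>c * indicator S h - c * indicator S k\<bar> \<le> zd h k" for h k
    using sep[of h k] sep[of k h] zd_sym[of h k] zd_nonneg[of h k] c by (auto simp: indicator_def)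
  have l1: "lip1 f" "lip1 (\<lambda>x. - f x)"
    unfolding lip1_def f_def
    using b d by (simp_all add: abs_minus_commute)
  have E: "measure_pmf.expectation p f = c * measure_pmf.prob p S" for p :: "zbar pmf"
    unfolding f_def by simp
  have E2: "measure_pmf.expectation p (\<lambda>x. - f x) = - (c * measure_pmf.prob p S)" for p :: "zbar pmf"
    using E[of p] by simp
  from bl_upper[OF l1(1), of \<nu> \<mu>] bl_upper[OF l1(2), of \<nu> \<mu>]
  show ?thesis unfolding E E2 using c
    by (auto simp: abs_if algebra_simps)
qed

lemma prob_ell:
  assumes "w \<noteq> []"
  shows "measure_pmf.prob (ell w) S = real (card {j. j < length w \<and> Fin (w ! j) \<in> S}) / real (length w)"
proof -
  have "mset w = image_mset (nth w) (mset_set {..<length w})"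
    by (metis map_nth mset_map mset_upt lessThan_atLeast0)
  then have "pmf_of_multiset (mset w) = map_pmf (nth w) (pmf_of_set {..<length w})"
    using assms by (subst map_pmf_of_set) auto
  then have "measure_pmf.prob (ell w) S = measure_pmf.prob (pmf_of_set {..<length w}) ((nth w) -` Fin -` S)"
    unfolding ell_def by simp
  also have "\<dots> = real (card ({..<length w} \<inter> (nth w) -` Fin -` S)) / real (length w)"
    using assms by (subst measure_pmf_of_set) auto
  also have "{..<length w} \<inter> (nth w) -` Fin -` S = {j. j < length w \<and> Fin (w ! j) \<in> S}" by auto
  finally show ?thesis .
qed
lemma prob_Fin_image:
  fixes \<mu> :: "zbar pmf" and \<mu>0 :: "int pmf"
  assumes "\<forall>k. pmf \<mu> (Fin k) = a0 * pmf \<mu>0 k"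
  shows "measure_pmf.prob \<mu> (Fin ` K) = a0 * measure_pmf.prob \<mu>0 K"
proof -
  have "measure_pmf.prob \<mu> (Fin ` K) = infsetsum (pmf \<mu>) (Fin ` K)"
    by (rule measure_pmf_conv_infsetsum)
  also have "\<dots> = infsetsum (\<lambda>k. pmf \<mu> (Fin k)) K"
    by (rule infsetsum_reindex_bij_betw[symmetric]) (auto simp: bij_betw_def inj_on_def)
  also have "\<dots> = infsetsum (\<lambda>k. a0 * pmf \<mu>0 k) K" using assms by simp
  also have "\<dots> = a0 * infsetsum (pmf \<mu>0) K"
    by (rule infsetsum_cmult_right) auto
  also have "\<dots> = a0 * measure_pmf.prob \<mu>0 K" by (simp add: measure_pmf_conv_infsetsum)
  finally show ?thesis .
qed

lemma prob_mu:
  fixes \<mu> :: "zbar pmf" and \<mu>0 :: "int pmf"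
  assumes "pmf \<mu> NInf = am" "pmf \<mu> PInf = ap" "\<forall>k. pmf \<mu> (Fin k) = a0 * pmf \<mu>0 k"
  shows "measure_pmf.prob \<mu> S = (if NInf \<in> S then am else 0) + (if PInf \<in> S then ap else 0)
           + a0 * measure_pmf.prob \<mu>0 {k. Fin k \<in> S}"
proof -
  have Sdec: "S = (S \<inter> {NInf, PInf}) \<union> Fin ` {k. Fin k \<in> S}"
    by auto (metis image_eqI mem_Collect_eq zbar.exhaust)
  have "measure_pmf.prob \<mu> S = measure_pmf.prob \<mu> (S \<inter> {NInf, PInf}) + measure_pmf.prob \<mu> (Fin ` {k. Fin k \<in> S})"
    by (subst Sdec, rule measure_pmf.finite_measure_Union) auto
  also have "measure_pmf.prob \<mu> (S \<inter> {NInf, PInf}) = (if NInf \<in> S then am else 0) + (if PInf \<in> S then ap else 0)"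
    using assms(1,2) by (subst measure_measure_pmf_finite) (auto simp: Int_insert_left)
  also have "measure_pmf.prob \<mu> (Fin ` {k. Fin k \<in> S}) = a0 * measure_pmf.prob \<mu>0 {k. Fin k \<in> S}"
    by (rule prob_Fin_image[OF assms(3)])
  finally show ?thesis .
qed

lemma Rmu0_exists:
  fixes \<mu>0 :: "int pmf" assumes "\<epsilon> > 0"
  shows "\<exists>R::nat. measure_pmf.prob \<mu>0 {- int R + 1 .. int R - 1} > 1 - \<epsilon>"
proof -
  define A where "A = (\<lambda>R::nat. {- int R + 1 .. int R - 1})"
  have inc: "incseq A" unfolding A_def incseq_def by auto
  have U: "(\<Union>i. A i) = UNIV"
  proof safe
    fix k :: int
    have "k \<in> A (nat \<bar>k\<bar> + 1)" unfolding A_def by auto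
    then show "k \<in> (\<Union>i. A i)" by blast
  qed auto
  have "(\<lambda>i. measure_pmf.prob \<mu>0 (A i)) \<longlonglongrightarrow> measure_pmf.prob \<mu>0 (\<Union>i. A i)"
    by (rule measure_pmf.finite_Lim_measure_incseq) (use inc in auto)
  then have "(\<lambda>i. measure_pmf.prob \<mu>0 (A i)) \<longlonglongrightarrow> 1" using U by simp
  from order_tendstoD(1)[OF this, of "1 - \<epsilon>"] assms
  have "eventually (\<lambda>i. measure_pmf.prob \<mu>0 (A i) > 1 - \<epsilon>) sequentially" by simp
  then obtain i where "measure_pmf.prob \<mu>0 (A i) > 1 - \<epsilon>"
    using eventually_sequentially by auto
  then show ?thesis unfolding A_def by blast
qed
lemma scale_arith:
  fixes N x e n :: real
  assumes "n > 0" "\<bar>N / n - x\<bar> < e" shows "\<bar>N - x * n\<bar> < e * n"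
proof -
  have "\<bar>N - x * n\<bar> = \<bar>N / n - x\<bar> * n" using assms(1)
    by (simp add: field_simps abs_mult[symmetric] abs_of_pos)
  also have "\<dots> < e * n" using assms by simp
  finally show ?thesis .
qed

lemma powr_sep_le:
  assumes "max \<bar>a\<bar> \<bar>a+1\<bar> \<le> int M"
  shows "2 powr (- real M) \<le> 2 powr (- real_of_int (max \<bar>a\<bar> \<bar>a+1\<bar>))"
  by (rule powr_mono) (use assms in auto)

theorem lemma2p3:
  fixes \<mu> :: "zbar pmf" and \<mu>0 :: "int pmf"
    and am a0 ap \<epsilon> :: real and R n :: nat and w :: "int list"
  assumes "am \<ge> 0" and "a0 \<ge> 0" and "ap \<ge> 0" and "am + a0 + ap = 1"
    and "pmf \<mu> NInf = am" and "pmf \<mu> PInf = ap"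
    and "\<forall>k. pmf \<mu> (Fin k) = a0 * pmf \<mu>0 k"
    and "\<epsilon> > 0"
    and "R > R_mu0 \<mu>0 \<epsilon>"
    and "w \<in> Omega0_ball n \<mu> (2 powr (- real R) * \<epsilon>)"
  shows "\<bar>real (Nminus R w) - am * real n\<bar> < 2 * \<epsilon> * real n
       \<and> \<bar>real (Nzero R w) - a0 * real n\<bar> < 2 * \<epsilon> * real n
       \<and> \<bar>real (Nplus R w) - ap * real n\<bar> < 2 * \<epsilon> * real n
       \<and> (\<forall>m \<in> {- int R, - int R + 1, int R - 1, int R}. real (Nm m w) < 3 * \<epsilon> * real n)"
proof -
  note mu = prob_mu[OF assms(5,6,7)]
  have a01: "a0 \<le> 1" using assms(1-4) by linarith
  from assms(10) have len: "length w = n" and n1: "n \<ge> 1"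
    and bl: "bl_dist (ell w) \<mu> < 2 powr (- real R) * \<epsilon>"
    unfolding Omega0_ball_def Omega0_def ballP_def by auto
  have wne: "w \<noteq> []" using len n1 by auto
  have npos: "real n > 0" using n1 by simp
  define Q where "Q = R_mu0 \<mu>0 \<epsilon>"
  have PQ: "measure_pmf.prob \<mu>0 {- int Q + 1 .. int Q - 1} > 1 - \<epsilon>"
    unfolding Q_def R_mu0_def by (rule LeastI_ex) (rule Rmu0_exists[OF assms(8)])
  have QR: "Q + 1 \<le> R" using assms(9) Q_def by simp
  have small: "measure_pmf.prob \<mu>0 K < \<epsilon>" if "K \<inter> {- int Q + 1 .. int Q - 1} = {}" for K
  proof -
    have "measure_pmf.prob \<mu>0 (K \<union> {- int Q + 1 .. int Q - 1}) =
          measure_pmf.prob \<mu>0 K + measure_pmf.prob \<mu>0 {- int Q + 1 .. int Q - 1}"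
      by (rule measure_pmf.finite_measure_Union) (use that in auto)
    moreover have "measure_pmf.prob \<mu>0 (K \<union> {- int Q + 1 .. int Q - 1}) \<le> 1"
      by (rule measure_pmf.prob_le_1)
    ultimately show ?thesis using PQ by linarith
  qed
  have key: "\<bar>measure_pmf.prob (ell w) S - measure_pmf.prob \<mu> S\<bar> * c < 2 powr (- real R) * \<epsilon>"
    if "0 < c" "c \<le> 1" "\<And>h k. h \<in> S \<Longrightarrow> k \<notin> S \<Longrightarrow> c \<le> zd h k" for S c
  proof -
    have "\<bar>measure_pmf.prob (ell w) S - measure_pmf.prob \<mu> S\<bar> * c \<le> bl_dist (ell w) \<mu>"
      by (rule sep_bound) (use that in auto)
    then show ?thesis using bl by linarith
  qed
  have c1: "0 < (2::real) powr (- real R)" "(2::real) powr (- real R) \<le> 1"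
    using powr_mono[of "- real R" 0 "2::real"] by simp_all
  have c2: "0 < (2::real) powr (- real R) / 2" "(2::real) powr (- real R) / 2 \<le> 1"
    using c1 by auto
  have R1: "R \<ge> 1" using QR by simp
  define Sp where "Sp = {x. \<not> le_cut (int R - 1) x}"
  have mP: "max \<bar>int R - 1\<bar> \<bar>int R - 1 + 1\<bar> \<le> int R" using R1 by auto
  have mM: "max \<bar>- int R\<bar> \<bar>- int R + 1\<bar> \<le> int R" using R1 by auto
  have sepP: "2 powr (- real R) \<le> zd h k" if "h \<in> Sp" "k \<notin> Sp" for h k
  proof -
    have "2 powr (- real_of_int (max \<bar>int R - 1\<bar> \<bar>int R - 1 + 1\<bar>)) \<le> zd k h"
      by (rule cut_sep) (use that in \<open>simp_all add: Sp_def\<close>)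
    then show ?thesis using powr_sep_le[OF mP] by (simp add: zd_sym)
  qed
  have kp: "\<bar>measure_pmf.prob (ell w) Sp - measure_pmf.prob \<mu> Sp\<bar> < \<epsilon>"
    using key[OF c1 sepP] c1(1) by (simp add: mult.commute)
  have pp: "measure_pmf.prob \<mu>0 {k. Fin k \<in> Sp} < \<epsilon>"
    by (rule small) (use QR in \<open>auto simp: Sp_def\<close>)
  have mp: "measure_pmf.prob \<mu> Sp = ap + a0 * measure_pmf.prob \<mu>0 {k. Fin k \<in> Sp}"
    using mu[of Sp] by (simp add: Sp_def)
  have np: "measure_pmf.prob (ell w) Sp = real (Nplus R w) / real n"
  proof -
    have "{j. j < length w \<and> Fin (w ! j) \<in> Sp} = {j. j < length w \<and> w ! j \<ge> int R}"
      by (auto simp: Sp_def)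
    then show ?thesis unfolding prob_ell[OF wne] Nplus_def len by simp
  qed
  have a0p: "0 \<le> a0 * measure_pmf.prob \<mu>0 {k. Fin k \<in> Sp}" "a0 * measure_pmf.prob \<mu>0 {k. Fin k \<in> Sp} \<le> measure_pmf.prob \<mu>0 {k. Fin k \<in> Sp}"
    using assms(2) a01 by (auto intro: mult_left_le_one_le)
  have P: "\<bar>real (Nplus R w) - ap * real n\<bar> < 2 * \<epsilon> * real n"
    by (rule scale_arith[OF npos]) (use kp pp mp np a0p in linarith)
  define Sm where "Sm = {x. le_cut (- int R) x}"
  have sepM: "2 powr (- real R) \<le> zd h k" if "h \<in> Sm" "k \<notin> Sm" for h k
  proof -
    have "2 powr (- real_of_int (max \<bar>- int R\<bar> \<bar>- int R + 1\<bar>)) \<le> zd h k"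
      by (rule cut_sep) (use that in \<open>simp_all add: Sm_def\<close>)
    then show ?thesis using powr_sep_le[OF mM] by simp
  qed
  have km: "\<bar>measure_pmf.prob (ell w) Sm - measure_pmf.prob \<mu> Sm\<bar> < \<epsilon>"
    using key[OF c1 sepM] c1(1) by (simp add: mult.commute)
  have pm: "measure_pmf.prob \<mu>0 {k. Fin k \<in> Sm} < \<epsilon>"
    by (rule small) (use QR in \<open>auto simp: Sm_def\<close>)
  have mm: "measure_pmf.prob \<mu> Sm = am + a0 * measure_pmf.prob \<mu>0 {k. Fin k \<in> Sm}"
    using mu[of Sm] by (simp add: Sm_def)
  have nm: "measure_pmf.prob (ell w) Sm = real (Nminus R w) / real n"
  proof -
    have "{j. j < length w \<and> Fin (w ! j) \<in> Sm} = {j. j < length w \<and> w ! j \<le> - int R}"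
      by (auto simp: Sm_def)
    then show ?thesis unfolding prob_ell[OF wne] Nminus_def len by simp
  qed
  have a0m: "0 \<le> a0 * measure_pmf.prob \<mu>0 {k. Fin k \<in> Sm}" "a0 * measure_pmf.prob \<mu>0 {k. Fin k \<in> Sm} \<le> measure_pmf.prob \<mu>0 {k. Fin k \<in> Sm}"
    using assms(2) a01 by (auto intro: mult_left_le_one_le)
  have M: "\<bar>real (Nminus R w) - am * real n\<bar> < 2 * \<epsilon> * real n"
    by (rule scale_arith[OF npos]) (use km pm mm nm a0m in linarith)
  define S0 where "S0 = {x. \<not> le_cut (- int R) x \<and> le_cut (int R - 1) x}"
  have sep0: "2 powr (- real R) \<le> zd h k" if "h \<in> S0" "k \<notin> S0" for h k
  proof (cases "le_cut (- int R) k")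
    case True
    have "2 powr (- real_of_int (max \<bar>- int R\<bar> \<bar>- int R + 1\<bar>)) \<le> zd k h"
      by (rule cut_sep) (use that True in \<open>simp_all add: S0_def\<close>)
    then show ?thesis using powr_sep_le[OF mM] by (simp add: zd_sym)
  next
    case False
    then have F: "\<not> le_cut (int R - 1) k" using that by (simp add: S0_def)
    have "2 powr (- real_of_int (max \<bar>int R - 1\<bar> \<bar>int R - 1 + 1\<bar>)) \<le> zd h k"
      by (rule cut_sep) (use that F in \<open>simp_all add: S0_def\<close>)
    then show ?thesis using powr_sep_le[OF mP] by simp
  qed
  have k0: "\<bar>measure_pmf.prob (ell w) S0 - measure_pmf.prob \<mu> S0\<bar> < \<epsilon>"
    using key[OF c1 sep0] c1(1) by (simp add: mult.commute)
  have p0: "measure_pmf.prob \<mu>0 {k. Fin k \<in> S0} \<ge> measure_pmf.prob \<mu>0 {- int Q + 1 .. int Q - 1}"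
    by (rule measure_pmf.finite_measure_mono) (use QR in \<open>auto simp: S0_def\<close>)
  have p01: "measure_pmf.prob \<mu>0 {k. Fin k \<in> S0} \<le> 1" by (rule measure_pmf.prob_le_1)
  have m0: "measure_pmf.prob \<mu> S0 = a0 * measure_pmf.prob \<mu>0 {k. Fin k \<in> S0}"
    using mu[of S0] by (simp add: S0_def)
  have n0: "measure_pmf.prob (ell w) S0 = real (Nzero R w) / real n"
  proof -
    have "{j. j < length w \<and> Fin (w ! j) \<in> S0} = {j. j < length w \<and> w ! j \<in> {- int R + 1 .. int R - 1}}"
      by (auto simp: S0_def)
    then show ?thesis unfolding prob_ell[OF wne] Nzero_def len by simp
  qed
  have a00: "a0 * (1 - measure_pmf.prob \<mu>0 {k. Fin k \<in> S0}) \<le> 1 - measure_pmf.prob \<mu>0 {k. Fin k \<in> S0}"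
    "a0 * (1 - measure_pmf.prob \<mu>0 {k. Fin k \<in> S0}) \<ge> 0"
    using assms(2) a01 p01 by (auto intro: mult_left_le_one_le)
  have Z: "\<bar>real (Nzero R w) - a0 * real n\<bar> < 2 * \<epsilon> * real n"
  proof (rule scale_arith[OF npos])
    have "a0 * measure_pmf.prob \<mu>0 {k. Fin k \<in> S0} = a0 - a0 * (1 - measure_pmf.prob \<mu>0 {k. Fin k \<in> S0})"
      by (simp add: algebra_simps)
    then show "\<bar>real (Nzero R w) / real n - a0\<bar> < 2 * \<epsilon>"
      using k0 p0 PQ m0 n0 a00 by linarith
  qed
  have S: "real (Nm m w) < 3 * \<epsilon> * real n" if m: "m \<in> {- int R, - int R + 1, int R - 1, int R}" for m
  proof -
    have mR: "\<bar>m\<bar> \<le> int R" using m R1 by auto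
    have sepm: "2 powr (- real R) / 2 \<le> zd h k" if "h \<in> {Fin m}" "k \<notin> {Fin m}" for h k
    proof -
      have e: "2 powr (- real R) / 2 = 2 powr (- real (R+1))"
        by (simp add: powr_diff powr_minus field_simps)
      have q1: "max \<bar>m - 1\<bar> \<bar>m - 1 + 1\<bar> \<le> int (R+1)" using mR by auto
      have q2: "max \<bar>m\<bar> \<bar>m + 1\<bar> \<le> int (R+1)" using mR by auto
      show ?thesis
      proof (cases "le_cut (m - 1) k")
        case True
        have "2 powr (- real_of_int (max \<bar>m - 1\<bar> \<bar>m - 1 + 1\<bar>)) \<le> zd k h"
          by (rule cut_sep) (use that True in auto)
        then have "2 powr (- real_of_int (max \<bar>m - 1\<bar> \<bar>m - 1 + 1\<bar>)) \<le> zd h k"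
          by (simp add: zd_sym[of h k])
        then show ?thesis unfolding e by (rule order_trans[OF powr_sep_le[OF q1]])
      next
        case False
        then have F: "\<not> le_cut m k" using that by (cases k) auto
        have "2 powr (- real_of_int (max \<bar>m\<bar> \<bar>m + 1\<bar>)) \<le> zd h k"
          by (rule cut_sep) (use that F in auto)
        then show ?thesis unfolding e by (rule order_trans[OF powr_sep_le[OF q2]])
      qed
    qed
    have ks: "\<bar>measure_pmf.prob (ell w) {Fin m} - measure_pmf.prob \<mu> {Fin m}\<bar> < 2 * \<epsilon>"
    proof -
      have "\<bar>measure_pmf.prob (ell w) {Fin m} - measure_pmf.prob \<mu> {Fin m}\<bar> * (2 powr (- real R) / 2)
            < 2 powr (- real R) * \<epsilon>" by (rule key[OF c2 sepm])
      then show ?thesis using c1(1) by (simp add: field_simps)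
    qed
    have ps: "measure_pmf.prob \<mu>0 {k. Fin k \<in> {Fin m}} < \<epsilon>"
      by (rule small) (use QR m in auto)
    have ms: "measure_pmf.prob \<mu> {Fin m} = a0 * measure_pmf.prob \<mu>0 {k. Fin k \<in> {Fin m}}"
      using mu[of "{Fin m}"] by simp
    have ns: "measure_pmf.prob (ell w) {Fin m} = real (Nm m w) / real n"
      unfolding prob_ell[OF wne] Nm_def len by simp
    have a0s: "a0 * measure_pmf.prob \<mu>0 {k. Fin k \<in> {Fin m}} \<le> measure_pmf.prob \<mu>0 {k. Fin k \<in> {Fin m}}"
      using assms(2) a01 by (auto intro: mult_left_le_one_le)
    have "real (Nm m w) / real n < 3 * \<epsilon>" using ks ps ms ns a0s by linarith
    then show ?thesis using npos by (simp add: field_simps)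
  qed
  show ?thesis using M Z P S by blast
qed

end
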